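(* Let $(X,d)$ be a complete metric space and $\ell:X\to[0,+\infty]$ a lower semicontinuous function with $\inf_X\ell=0$ satisfying hypothesis $(H_0)$. Then there exists a unique proper lower semicontinuous function $u:X\to[0,+\infty]$ with $\inf_Xu=0$ and $G[u](x)=\ell(x)$ for all $x\in X$.
   Context: Global slope: $G[u](x)=\sup_{y\neq x}\frac{(u(x)-u(y))_+}{d(x,y)}$ if $u(x)<+\infty$ and $G[u](x)=+\infty$ otherwise. Hypothesis $(H_0)$: there is a sequence $\{\bar x_n\}_n\subset X$ with $\sum_{n=0}^\infty\ell(\bar x_n)d(\bar x_n,\bar x_{n+1})<+\infty$ and $\lim_{n\to\infty}\ell(\bar x_n)=0$. Proper means not identically $+\infty$. *)

theory Defs
  imports "HOL-Analysis.Analysis"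
begin

definition lsc :: "('a::topological_space \<Rightarrow> ennreal) \<Rightarrow> bool" where
  "lsc f \<longleftrightarrow> (\<forall>t. closed {x. f x \<le> t})"

text \<open>Global slope. For ennreal, truncated subtraction gives the positive part
  (and u x - \<infinity> = 0 when u x is finite).\<close>
definition global_slope :: "('a::metric_space \<Rightarrow> ennreal) \<Rightarrow> 'a \<Rightarrow> ennreal" where
  "global_slope u x =
     (if u x < \<infinity> then (SUP y\<in>{y. y \<noteq> x}. (u x - u y) / ennreal (dist x y)) else \<infinity>)"

definition H0 :: "('a::metric_space \<Rightarrow> ennreal) \<Rightarrow> bool" where
  "H0 l \<longleftrightarrow> (\<exists>xb::nat \<Rightarrow> 'a.
      (\<Sum>n. l (xb n) * ennreal (dist (xb n) (xb (Suc n)))) < \<infinity> \<and>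
      (\<lambda>n. l (xb n)) \<longlonglongrightarrow> 0)"

definition proper :: "('a \<Rightarrow> ennreal) \<Rightarrow> bool" where
  "proper u \<longleftrightarrow> (\<exists>x. u x \<noteq> \<infinity>)"

end

theory Submission
  imports Defs
begin


lemma ennreal_diff_div:
  assumes "0 \<le> a" "0 \<le> b" "0 < d"
  shows "(ennreal a - ennreal b) / ennreal d = ennreal (max 0 (a - b) / d)"
proof -
  have "ennreal a - ennreal b = ennreal (max 0 (a - b))"
    using assms by (simp add: ennreal_minus max_def ennreal_neg)
  then show ?thesis using assms by (simp add: divide_ennreal)
qed

lemma slope_le_iff:
  fixes h :: "'a::metric_space \<Rightarrow> ennreal"
  assumes "h p < \<infinity>" "0 \<le> c"
  shows "global_slope h p \<le> ennreal c \<longleftrightarrow> (\<forall>q. h p \<le> h q + ennreal (c * dist p q))"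
proof
  assume A: "global_slope h p \<le> ennreal c"
  show "\<forall>q. h p \<le> h q + ennreal (c * dist p q)"
  proof
    fix q
    show "h p \<le> h q + ennreal (c * dist p q)"
    proof (cases "q = p")
      case True then show ?thesis by simp
    next
      case False
      show ?thesis
      proof (cases "h q = \<infinity>")
        case True then show ?thesis by simp
      next
        case False2: False
        obtain a where a: "h p = ennreal a" "0 \<le> a" using assms(1) by (cases "h p") auto
        obtain b where b: "h q = ennreal b" "0 \<le> b" using False2 by (cases "h q") auto
        have d: "0 < dist p q" using False by simp
        have "(h p - h q) / ennreal (dist p q) \<le> global_slope h p"
          unfolding global_slope_def using assms(1) False
          by (auto intro!: SUP_upper)
        also note A
        finally have "ennreal (max 0 (a - b) / dist p q) \<le> ennreal c"
          using ennreal_diff_div[OF a(2) b(2) d] a b by simp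
        then have "max 0 (a - b) / dist p q \<le> c"
          using assms(2) by (simp add: ennreal_le_iff)
        then have "a - b \<le> c * dist p q" using d by (simp add: field_simps)
        then have "a \<le> b + c * dist p q" by simp
        then show ?thesis using a b d assms(2)
          by (simp add: ennreal_plus[symmetric] del: ennreal_plus)
      qed
    qed
  qed
next
  assume A: "\<forall>q. h p \<le> h q + ennreal (c * dist p q)"
  show "global_slope h p \<le> ennreal c"
    unfolding global_slope_def using assms(1)
  proof (simp, intro SUP_least, clarsimp)
    fix q assume qp: "q \<noteq> p"
    have d: "0 < dist p q" using qp by simp
    show "(h p - h q) / ennreal (dist p q) \<le> ennreal c"
    proof (cases "h q = \<infinity>")
      case True
      then show ?thesis using assms(1) by (auto simp add: minus_top_ennreal)
    next
      case False
      obtain a where a: "h p = ennreal a" "0 \<le> a" using assms(1) by (cases "h p") auto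
      obtain b where b: "h q = ennreal b" "0 \<le> b" using False by (cases "h q") auto
      have "ennreal a \<le> ennreal (b + c * dist p q)"
        using A[rule_format, of q] a b d assms(2) by (simp add: ennreal_plus[symmetric] del: ennreal_plus)
      then have "a \<le> b + c * dist p q" using assms(2) b(2) d
        by (subst (asm) ennreal_le_iff) auto
      then have "max 0 (a - b) / dist p q \<le> c" using d assms(2) by (simp add: field_simps)
      then show ?thesis using ennreal_diff_div[OF a(2) b(2) d] a b by (simp add: ennreal_leI)
    qed
  qed
qed

lemma slope_ge:
  fixes h :: "'a::metric_space \<Rightarrow> ennreal"
  assumes "h p = ennreal a" "0 \<le> a" "h q = ennreal b" "0 \<le> b" "q \<noteq> p" "0 \<le> c"
    and "c * dist p q \<le> a - b"
  shows "ennreal c \<le> global_slope h p"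
proof -
  have d: "0 < dist p q" using assms(5) by simp
  have "c \<le> max 0 (a - b) / dist p q" using assms(7) d by (simp add: field_simps)
  then have "ennreal c \<le> (h p - h q) / ennreal (dist p q)"
    using ennreal_diff_div[OF assms(2) assms(4) d] assms by (simp add: ennreal_leI)
  also have "\<dots> \<le> global_slope h p"
    unfolding global_slope_def using assms(1) assms(5)
    by (auto intro!: SUP_upper)
  finally show ?thesis .
qed

lemma lscD: "lsc g \<Longrightarrow> closed {w. g w \<le> t}"
  by (simp add: lsc_def)

lemma ekeland:
  fixes g :: "'a::complete_space \<Rightarrow> ennreal"
  assumes lsc: "lsc g" and gx: "g x < \<infinity>" and lam: "0 < lam"
  shows "\<exists>z. g z \<le> g x \<and> lam * dist z x \<le> enn2real (g x) - enn2real (g z)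
              \<and> global_slope g z \<le> ennreal lam"
proof -
  define gr where "gr w = enn2real (g w)" for w
  define S where "S y = {w. g w \<le> g x \<and> gr w + lam * dist w y \<le> gr y}" for y
  have fin: "g w = ennreal (gr w)" if "g w \<le> g x" for w
  proof -
    have "g w \<noteq> top" using that gx by (auto simp: top_unique)
    then show ?thesis unfolding gr_def by (simp add: ennreal_enn2real_if)
  qed
  have gr0: "0 \<le> gr w" for w by (simp add: gr_def)
  have E1: "y \<in> S y" if "g y \<le> g x" for y using that by (simp add: S_def)
  have E2: "w \<in> S b" if "w \<in> S a" "a \<in> S b" for w a b
  proof -
    have "lam * dist w b \<le> lam * dist w a + lam * dist a b"
      using mult_left_mono[OF dist_triangle[of w b a], of lam] lam by (simp add: distrib_left)
    then show ?thesis using that by (simp add: S_def)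
  qed
  have E3: "closed (S y)" for y
    unfolding closed_sequential_limits
  proof (intro allI impI, elim conjE)
    fix xs l assume xsS: "\<forall>n. xs n \<in> S y" and lim: "xs \<longlonglongrightarrow> l"
    have gl: "g l \<le> g x"
      using Lim_in_closed_set[OF lscD[OF lsc, of "g x"] _ sequentially_bot lim] xsS
      by (simp add: S_def)
    have eps: "gr l \<le> gr y - lam * dist l y + e" if e: "0 < e" for e
    proof -
      define t0 where "t0 = gr y - lam * dist l y + e"
      have "(\<lambda>n. dist (xs n) y) \<longlonglongrightarrow> dist l y"
        by (intro tendsto_dist lim tendsto_const)
      then have ev: "eventually (\<lambda>n. dist l y - e / lam < dist (xs n) y) sequentially"
        using e lam by (intro order_tendstoD(1)) auto
      have ev3: "eventually (\<lambda>n. gr (xs n) \<le> t0) sequentially"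
        using ev
      proof eventually_elim
        case (elim n)
        have "lam * (dist l y - e / lam) < lam * dist (xs n) y"
          using elim lam by simp
        then have "lam * dist l y - e < lam * dist (xs n) y" using lam by (simp add: right_diff_distrib)
        moreover have "gr (xs n) + lam * dist (xs n) y \<le> gr y" using xsS by (simp add: S_def)
        ultimately show "gr (xs n) \<le> t0" unfolding t0_def by linarith
      qed
      have ev2: "eventually (\<lambda>n. xs n \<in> {w. g w \<le> ennreal t0}) sequentially"
        using ev3
      proof eventually_elim
        case (elim n)
        have "g (xs n) \<le> g x" using xsS by (simp add: S_def)
        then have "g (xs n) = ennreal (gr (xs n))" by (rule fin)
        then show ?case using elim by (simp add: ennreal_leI)
      qed
      have "g l \<le> ennreal t0"
        using Lim_in_closed_set[OF lscD[OF lsc, of "ennreal t0"] ev2 sequentially_bot lim] by simp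
      moreover have "0 \<le> t0"
      proof -
        obtain N where "\<forall>n\<ge>N. gr (xs n) \<le> t0" using ev3 by (auto simp: eventually_sequentially)
        then show ?thesis using gr0[of "xs N"] by force
      qed
      ultimately have "gr l \<le> t0" using fin[OF gl] by (simp add: ennreal_le_iff)
      then show ?thesis unfolding t0_def .
    qed
    have "gr l + lam * dist l y \<le> gr y"
    proof (rule field_le_epsilon)
      fix e :: real assume "0 < e"
      then show "gr l + lam * dist l y \<le> gr y + e" using eps[of e] by linarith
    qed
    then show "l \<in> S y" using gl by (simp add: S_def)
  qed
  have step: "\<exists>w. w \<in> S p \<and> gr w < Inf (gr ` S p) + (1/2)^n" if gp: "g p \<le> g x" for p n
  proof -
    have "Inf (gr ` S p) < Inf (gr ` S p) + (1/2)^n" by simp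
    then obtain v where "v \<in> gr ` S p" "v < Inf (gr ` S p) + (1/2)^n"
      using cInf_lessD[of "gr ` S p" "Inf (gr ` S p) + (1/2)^n"] E1[OF gp] by blast
    then show ?thesis by blast
  qed
  define ys where "ys = rec_nat x (\<lambda>n p. SOME w. w \<in> S p \<and> gr w < Inf (gr ` S p) + (1/2)^n)"
  have ys0: "ys 0 = x" by (simp add: ys_def)
  have ysS: "ys (Suc n) = (SOME w. w \<in> S (ys n) \<and> gr w < Inf (gr ` S (ys n)) + (1/2)^n)" for n
    by (simp add: ys_def)
  have H: "g (ys n) \<le> g x" for n
  proof (induction n)
    case 0 then show ?case by (simp add: ys0)
  next
    case (Suc n)
    have "ys (Suc n) \<in> S (ys n)" unfolding ysS using someI_ex[OF step[of "ys n" n, OF Suc.IH]] by simp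
    then show ?case by (simp add: S_def)
  qed
  have Y: "ys (Suc n) \<in> S (ys n) \<and> gr (ys (Suc n)) < Inf (gr ` S (ys n)) + (1/2)^n" for n
    unfolding ysS using someI_ex[OF step[of "ys n" n, OF H]] by simp
  have E5: "ys m \<in> S (ys n)" if "n \<le> m" for m n
    using that
  proof (induction m rule: dec_induct)
    case base then show ?case using E1[OF H] by simp
  next
    case (step m) then show ?case using E2[OF conjunct1[OF Y[of m]] step.IH] by simp
  qed
  have bdd: "bdd_below (gr ` S p)" for p using gr0 by (intro bdd_belowI) auto
  have E6: "lam * dist w (ys (Suc n)) < (1/2)^n" if "w \<in> S (ys (Suc n))" for w n
  proof -
    have "w \<in> S (ys n)" using E2[OF that conjunct1[OF Y[of n]]] by simp
    then have "Inf (gr ` S (ys n)) \<le> gr w" using bdd by (intro cInf_lower) auto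
    moreover have "gr w + lam * dist w (ys (Suc n)) \<le> gr (ys (Suc n))" using that by (simp add: S_def)
    ultimately show ?thesis using Y[of n] by linarith
  qed
  have "Cauchy ys"
    unfolding Cauchy_def
  proof (intro allI impI)
    fix e :: real assume e: "0 < e"
    obtain N where N: "(1/2::real)^N < lam * e / 2"
      using real_arch_pow_inv[of "lam * e / 2" "1/2"] e lam by auto
    have "dist (ys m) (ys n) < e" if "Suc N \<le> m" "Suc N \<le> n" for m n
    proof -
      have "lam * dist (ys m) (ys (Suc N)) < (1/2)^N" using E6[OF E5[OF that(1)]] by simp
      moreover have "lam * dist (ys n) (ys (Suc N)) < (1/2)^N" using E6[OF E5[OF that(2)]] by simp
      ultimately have "lam * (dist (ys m) (ys (Suc N)) + dist (ys n) (ys (Suc N))) < lam * e"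
        using N by (simp add: distrib_left)
      then have "dist (ys m) (ys (Suc N)) + dist (ys n) (ys (Suc N)) < e" using lam by simp
      then show ?thesis using dist_triangle2[of "ys m" "ys n" "ys (Suc N)"] by linarith
    qed
    then show "\<exists>M. \<forall>m\<ge>M. \<forall>n\<ge>M. dist (ys m) (ys n) < e" by blast
  qed
  then obtain z where lim: "ys \<longlonglongrightarrow> z" using Cauchy_convergent_iff convergent_def by blast
  have E8: "z \<in> S (ys n)" for n
  proof -
    have "eventually (\<lambda>m. ys m \<in> S (ys n)) sequentially"
      using E5 by (auto simp: eventually_sequentially)
    then show ?thesis using Lim_in_closed_set[OF E3 _ sequentially_bot lim] by simp
  qed
  have E9: "w = z" if "w \<in> S z" for w
  proof (rule ccontr)
    assume "w \<noteq> z"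
    then have d: "0 < dist w z" by simp
    obtain n where n: "(1/2::real)^n < lam * dist w z / 2"
      using real_arch_pow_inv[of "lam * dist w z / 2" "1/2"] d lam by auto
    have "lam * dist w (ys (Suc n)) < (1/2)^n" using E6[OF E2[OF that E8[of "Suc n"]]] by simp
    moreover have "lam * dist z (ys (Suc n)) < (1/2)^n" using E6[OF E8[of "Suc n"]] by simp
    ultimately have "lam * (dist w (ys (Suc n)) + dist z (ys (Suc n))) < lam * dist w z"
      using n by (simp add: distrib_left)
    then have "dist w (ys (Suc n)) + dist z (ys (Suc n)) < dist w z" using lam by simp
    then show False using dist_triangle2[of w z "ys (Suc n)"] by linarith
  qed
  have zS: "z \<in> S x" using E8[of 0] by (simp add: ys0)
  then have gz: "g z \<le> g x" and gz2: "gr z + lam * dist z x \<le> gr x" by (auto simp: S_def)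
  have "global_slope g z \<le> ennreal lam"
  proof (subst slope_le_iff)
    show "g z < \<infinity>" using gz gx by simp
    show "0 \<le> lam" using lam by simp
    show "\<forall>q. g z \<le> g q + ennreal (lam * dist z q)"
    proof
      fix q
      show "g z \<le> g q + ennreal (lam * dist z q)"
      proof (cases "q = z")
        case True then show ?thesis by simp
      next
        case False
        show ?thesis
        proof (cases "g q \<le> g x")
          case True
          then have "q \<notin> S z" using E9 False by blast
          then have "gr z < gr q + lam * dist z q" using True by (simp add: S_def dist_commute)
          then have "ennreal (gr z) \<le> ennreal (gr q + lam * dist z q)" by (simp add: ennreal_leI)
          then show ?thesis using fin[OF gz] fin[OF True] lam gr0[of q]
            by (simp add: ennreal_plus[symmetric] del: ennreal_plus)
        next
          case False
          then have "g z \<le> g q" using gz by simp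
          then show ?thesis by (simp add: add_increasing2)
        qed
      qed
    qed
  qed
  then show ?thesis using gz gz2 unfolding gr_def by (intro exI[of _ z]) auto
qed



lemma slope_top: "h p = \<infinity> \<Longrightarrow> global_slope h p = \<infinity>"
  by (simp add: global_slope_def)

lemma comparison:
  fixes f g :: "'a::complete_space \<Rightarrow> ennreal"
  assumes lf: "lsc f" and lg: "lsc g" and inff: "(INF x. f x) = 0"
    and sl: "\<And>x. global_slope f x \<le> global_slope g x"
  shows "f x \<le> g x"
proof (cases "g x = \<infinity>")
  case True then show ?thesis by simp
next
  case False
  define gr where "gr w = enn2real (g w)" for w
  define fr where "fr w = enn2real (f w)" for w
  define gx where "gx = gr x"
  have gxe: "g x = ennreal gx" using False by (simp add: gx_def gr_def ennreal_enn2real_if)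
  have gx0: "0 \<le> gx" by (simp add: gx_def gr_def)
  have gr0: "0 \<le> gr w" for w by (simp add: gr_def)
  have fr0: "0 \<le> fr w" for w by (simp add: fr_def)
  have fin: "g w = ennreal (gr w)" if "g w \<le> g x" for w
  proof -
    have "g w \<noteq> top" using that False by (auto simp: top_unique)
    then show ?thesis unfolding gr_def by (simp add: ennreal_enn2real_if)
  qed
  have finf: "f w = ennreal (fr w)" if "f w < \<infinity>" for w
    using that unfolding fr_def by (simp add: ennreal_enn2real_if)
  have main: "\<exists>z. dist z x \<le> gx / lam0 \<and> f z \<le> ennreal ((1+eps) * gx)"
    if eps: "0 < eps" and l0: "0 < lam0" for eps lam0
  proof -
    define lam where "lam k = lam0 / (1+eps)^k" for k
    have lampos: "0 < lam k" for k using eps l0 by (simp add: lam_def)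
    have lamS: "lam k = (1+eps) * lam (Suc k)" for k
    proof -
      have "(1+eps)^k \<noteq> 0" "1 + eps \<noteq> 0" using eps by auto
      then show ?thesis by (simp add: lam_def)
    qed
    define EK where "EK p L z \<longleftrightarrow> g z \<le> g p \<and> L * dist z p \<le> enn2real (g p) - enn2real (g z)
        \<and> global_slope g z \<le> ennreal L" for p L z
    define a where "a = rec_nat x (\<lambda>k p. SOME z. EK p (lam k) z)"
    have a0: "a 0 = x" by (simp add: a_def)
    have aS: "a (Suc k) = (SOME z. EK (a k) (lam k) z)" for k by (simp add: a_def)
    have exEK: "\<exists>z. EK p L z" if "g p \<le> g x" "0 < L" for p L
    proof -
      have "g p < \<infinity>" using that False by (auto simp: top_unique less_top)
      then show ?thesis unfolding EK_def using ekeland[OF lg _ that(2)] by blast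
    qed
    have ga: "g (a k) \<le> g x \<and> EK (a k) (lam k) (a (Suc k))" for k
    proof (induction k)
      case 0
      have "EK (a 0) (lam 0) (a (Suc 0))" unfolding aS using someI_ex[OF exEK[OF _ lampos]] a0 by simp
      then show ?case using a0 by simp
    next
      case (Suc k)
      then have g1: "g (a (Suc k)) \<le> g x" unfolding EK_def by auto
      have "EK (a (Suc k)) (lam (Suc k)) (a (Suc (Suc k)))"
        unfolding aS[of "Suc k"] using someI_ex[OF exEK[OF g1 lampos]] by simp
      then show ?case using g1 by simp
    qed
    have gak: "g (a k) \<le> g x" for k using ga by blast
    have ek1: "lam k * dist (a (Suc k)) (a k) \<le> gr (a k) - gr (a (Suc k))" for k
      using ga[of k] unfolding EK_def gr_def by blast
    have ek2: "global_slope g (a (Suc k)) \<le> ennreal (lam k)" for k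
      using ga[of k] unfolding EK_def by blast
    have grdec: "gr (a (Suc k)) \<le> gr (a k)" for k
      using ek1[of k] lampos[of k] by (smt (verit) zero_le_dist mult_nonneg_nonneg)
    have grx: "gr (a k) \<le> gx" for k
    proof (induction k)
      case 0 then show ?case by (simp add: a0 gx_def)
    next
      case (Suc k) then show ?case using grdec[of k] by linarith
    qed
    have sf: "global_slope f (a (Suc k)) \<le> ennreal (lam k)" for k
      using sl[of "a (Suc k)"] ek2[of k] by (rule order_trans)
    have ffin: "f (a (Suc k)) < \<infinity>" for k
    proof (rule ccontr)
      assume "\<not> f (a (Suc k)) < \<infinity>"
      then have "f (a (Suc k)) = \<infinity>" using less_top[of "f (a (Suc k))"] by simp
      then have "global_slope f (a (Suc k)) = \<infinity>" by (rule slope_top)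
      then show False using sf[of k] by (simp add: top_unique)
    qed
    have fle: "f (a (Suc k)) \<le> f q + ennreal (lam k * dist (a (Suc k)) q)" for k q
      using slope_le_iff[of f "a (Suc k)" "lam k", OF ffin[of k] less_imp_le[OF lampos[of k]]] sf[of k] by blast
    have fler: "fr (a (Suc k)) \<le> fr q + lam k * dist (a (Suc k)) q" if "f q < \<infinity>" for k q
    proof -
      have "ennreal (fr (a (Suc k))) \<le> ennreal (fr q + lam k * dist (a (Suc k)) q)"
        using fle[of k q] finf[OF ffin[of k]] finf[OF that] lampos[of k] fr0[of q]
        by (simp add: ennreal_plus[symmetric] del: ennreal_plus)
      then show ?thesis using lampos[of k] fr0[of q]
        by (subst (asm) ennreal_le_iff) auto
    qed
    have R1: "fr (a (Suc k)) \<le> fr (a (Suc (Suc k))) + (1+eps) * (gr (a (Suc k)) - gr (a (Suc (Suc k))))" for k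
    proof -
      have "fr (a (Suc k)) \<le> fr (a (Suc (Suc k))) + lam k * dist (a (Suc k)) (a (Suc (Suc k)))"
        using fler[OF ffin[of "Suc k"], of k] .
      moreover have "lam k * dist (a (Suc k)) (a (Suc (Suc k))) = (1+eps) * (lam (Suc k) * dist (a (Suc (Suc k))) (a (Suc k)))"
        using lamS[of k] by (simp add: dist_commute)
      moreover have "(1+eps) * (lam (Suc k) * dist (a (Suc (Suc k))) (a (Suc k))) \<le> (1+eps) * (gr (a (Suc k)) - gr (a (Suc (Suc k))))"
        using ek1[of "Suc k"] eps by (intro mult_left_mono) auto
      ultimately show ?thesis by linarith
    qed
    have R2: "fr (a 1) \<le> fr (a (Suc n)) + (1+eps) * (gr (a 1) - gr (a (Suc n)))" for n
    proof (induction n)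
      case 0 then show ?case by simp
    next
      case (Suc n)
      then show ?case using R1[of n] by (simp add: algebra_simps)
    qed
    have key: "\<exists>n. fr (a (Suc n)) < \<delta>" if d: "0 < \<delta>" for \<delta>
    proof (rule ccontr)
      assume "\<not> (\<exists>n. fr (a (Suc n)) < \<delta>)"
      then have big: "\<delta> \<le> fr (a (Suc n))" for n by (simp add: not_less)
      have "(INF x. f x) < ennreal (\<delta>/2)" using inff d by simp
      then obtain m where m: "f m < ennreal (\<delta>/2)" by (auto simp: INF_less_iff)
      have mfin: "f m < \<infinity>" using order.strict_trans[OF m ennreal_less_top] by simp
      have fm: "fr m < \<delta>/2" using m finf[OF mfin] ennreal_less_iff[OF fr0[of m], of "\<delta>/2"] by simp
      define r where "r n = dist (a (Suc n)) m" for n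
      have rb: "\<delta>/2 < lam n * r n" for n
        using fler[OF mfin, of n] big[of n] fm unfolding r_def by linarith
      have rpos: "0 < r n" for n
      proof -
        have "0 < lam n * r n" using rb[of n] d by linarith
        then show ?thesis using lampos[of n] by (simp add: zero_less_mult_iff)
      qed
      have rlow: "\<delta> * (1+eps)^n / (2 * lam0) < r n" for n
      proof -
        have "\<delta>/2 < lam0 / (1+eps)^n * r n" using rb[of n] by (simp add: lam_def)
        then show ?thesis using eps l0 by (simp add: field_simps)
      qed
      define C where "C = (2/\<delta>) * (1+eps)"
      have C0: "0 \<le> C" using d eps by (simp add: C_def)
      have stepln: "ln (r (Suc n)) - ln (r n) \<le> C * (gr (a (Suc n)) - gr (a (Suc (Suc n))))" for n
      proof -
        define D where "D = dist (a (Suc n)) (a (Suc (Suc n)))"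
        have D0: "0 \<le> D" by (simp add: D_def)
        have tri: "r (Suc n) \<le> r n + D"
          unfolding r_def D_def using dist_triangle[of "a (Suc (Suc n))" m "a (Suc n)"]
          by (simp add: dist_commute)
        have "ln (r (Suc n)) - ln (r n) = ln (r (Suc n) / r n)"
          using rpos[of n] rpos[of "Suc n"] by (simp add: ln_div)
        also have "\<dots> \<le> r (Suc n) / r n - 1"
          using rpos by (intro ln_le_minus_one) (simp add: divide_pos_pos)
        also have "\<dots> = (r (Suc n) - r n) / r n"
          using rpos[of n] by (simp add: diff_divide_distrib)
        also have "\<dots> \<le> D / r n"
          using tri rpos[of n] by (intro divide_right_mono) auto
        also have "D / r n \<le> (2/\<delta>) * lam n * D"
        proof -
          have "1 / r n < (2/\<delta>) * lam n" using rb[of n] rpos[of n] d by (simp add: field_simps)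
          then have "D * (1 / r n) \<le> D * ((2/\<delta>) * lam n)" using D0 by (intro mult_left_mono) auto
          then show ?thesis by (simp add: field_simps)
        qed
        also have "(2/\<delta>) * lam n * D = C * (lam (Suc n) * dist (a (Suc (Suc n))) (a (Suc n)))"
          using lamS[of n] by (simp add: C_def D_def dist_commute)
        also have "\<dots> \<le> C * (gr (a (Suc n)) - gr (a (Suc (Suc n))))"
          using ek1[of "Suc n"] C0 by (intro mult_left_mono) auto
        finally show ?thesis .
      qed
      have tele: "ln (r n) \<le> ln (r 0) + C * (gr (a 1) - gr (a (Suc n)))" for n
      proof (induction n)
        case 0 then show ?case by simp
      next
        case (Suc n) then show ?case using stepln[of n] by (simp add: algebra_simps)
      qed
      define B where "B = ln (r 0) + C * gx"
      have rup: "r n \<le> exp B" for n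
      proof -
        have "C * (gr (a 1) - gr (a (Suc n))) \<le> C * gx"
          using C0 grx[of 1] gr0[of "a (Suc n)"] by (intro mult_left_mono) auto
        then have "ln (r n) \<le> B" using tele[of n] by (simp add: B_def)
        then have "exp (ln (r n)) \<le> exp B" by simp
        then show ?thesis using rpos[of n] by simp
      qed
      obtain n where n: "exp B * (2 * lam0) / \<delta> < (1+eps)^n"
        using real_arch_pow[of "1+eps"] eps by auto
      then have "exp B < \<delta> * (1+eps)^n / (2 * lam0)" using d l0 by (simp add: field_simps)
      then show False using rlow[of n] rup[of n] by linarith
    qed
    have fa1: "fr (a 1) \<le> (1+eps) * gx"
    proof (rule field_le_epsilon)
      fix \<delta> :: real assume "0 < \<delta>"
      then obtain n where n: "fr (a (Suc n)) < \<delta>" using key by blast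
      have "(1+eps) * (gr (a 1) - gr (a (Suc n))) \<le> (1+eps) * gx"
        using eps grx[of 1] gr0[of "a (Suc n)"] by (intro mult_left_mono) auto
      then show "fr (a 1) \<le> (1+eps) * gx + \<delta>" using R2[of n] n by linarith
    qed
    have "lam 0 * dist (a 1) x \<le> gx - gr (a 1)" using ek1[of 0] by (simp add: a0 gx_def)
    then have "lam0 * dist (a 1) x \<le> gx" using gr0[of "a 1"] by (simp add: lam_def)
    then have dz: "dist (a 1) x \<le> gx / lam0" using l0 by (simp add: field_simps)
    have "f (a 1) \<le> ennreal ((1+eps) * gx)"
      using finf[OF ffin[of 0]] fa1 by (simp add: ennreal_leI)
    then show ?thesis using dz by blast
  qed
  have feps: "f x \<le> ennreal ((1+eps) * gx)" if eps: "0 < eps" for eps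
  proof -
    define t where "t = ennreal ((1+eps) * gx)"
    define z where "z k = (SOME z. dist z x \<le> gx / real (Suc k) \<and> f z \<le> t)" for k
    have zk: "dist (z k) x \<le> gx / real (Suc k) \<and> f (z k) \<le> t" for k
    proof -
      have "\<exists>z. dist z x \<le> gx / real (Suc k) \<and> f z \<le> t"
        using main[OF eps, of "real (Suc k)"] by (simp add: t_def)
      then show ?thesis unfolding z_def by (rule someI_ex)
    qed
    have "(\<lambda>k. gx * inverse (real (Suc k))) \<longlonglongrightarrow> gx * 0"
      by (intro tendsto_mult tendsto_const LIMSEQ_inverse_real_of_nat)
    then have L: "(\<lambda>k. gx * inverse (real (Suc k))) \<longlonglongrightarrow> 0" by simp
    have ev1: "eventually (\<lambda>k. 0 \<le> dist (z k) x) sequentially" by simp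
    have ev2: "eventually (\<lambda>k. dist (z k) x \<le> gx * inverse (real (Suc k))) sequentially"
    proof (intro always_eventually allI)
      fix k
      show "dist (z k) x \<le> gx * inverse (real (Suc k))" using conjunct1[OF zk[of k]] by (simp add: divide_inverse)
    qed
    have "(\<lambda>k. dist (z k) x) \<longlonglongrightarrow> 0"
      by (rule real_tendsto_sandwich[OF ev1 ev2 tendsto_const L])
    then have lim: "z \<longlonglongrightarrow> x" by (rule tendsto_dist_iff[THEN iffD2])
    have "x \<in> {w. f w \<le> t}"
      using Lim_in_closed_set[OF lscD[OF lf, of t] _ sequentially_bot lim] zk by simp
    then show ?thesis by (simp add: t_def)
  qed
  show ?thesis
  proof (rule ennreal_le_epsilon)
    fix e :: real assume e: "0 < e"
    define eps where "eps = e / (gx + 1)"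
    have eps0: "0 < eps" using e gx0 by (simp add: eps_def)
    have "(1+eps) * gx \<le> gx + e"
    proof -
      have "eps * gx \<le> e" using e gx0 by (simp add: eps_def field_simps)
      then show ?thesis by (simp add: algebra_simps)
    qed
    then have "f x \<le> ennreal (gx + e)" using order_trans[OF feps[OF eps0] ennreal_leI] by blast
    then show "f x \<le> g x + ennreal e" using gxe gx0 e by (simp add: ennreal_plus[symmetric] del: ennreal_plus)
  qed
qed



definition adm :: "('a::metric_space \<Rightarrow> ennreal) \<Rightarrow> 'a \<Rightarrow> (nat \<Rightarrow> 'a) \<Rightarrow> bool" where
  "adm l x s \<longleftrightarrow> s 0 = x \<and> (\<lambda>n. l (s n)) \<longlonglongrightarrow> 0"

definition cost :: "('a::metric_space \<Rightarrow> ennreal) \<Rightarrow> (nat \<Rightarrow> 'a) \<Rightarrow> ennreal" where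
  "cost l s = (\<Sum>n. l (s n) * ennreal (dist (s n) (s (Suc n))))"

definition Tf :: "('a::metric_space \<Rightarrow> ennreal) \<Rightarrow> 'a \<Rightarrow> ennreal" where
  "Tf l x = (INF s\<in>{s. adm l x s}. cost l s)"

definition Uf :: "('a::metric_space \<Rightarrow> ennreal) \<Rightarrow> 'a \<Rightarrow> ennreal" where
  "Uf l x = (SUP r\<in>{0<..}. INF y\<in>ball x r. Tf l y)"

lemma INF_approx:
  fixes F :: "'b \<Rightarrow> ennreal"
  assumes "(INF s\<in>A. F s) < \<infinity>" "0 < e"
  shows "\<exists>s\<in>A. F s < (INF s\<in>A. F s) + ennreal e"
proof -
  obtain t where t: "(INF s\<in>A. F s) = ennreal t" "0 \<le> t"
    using assms(1) by (cases "INF s\<in>A. F s") auto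
  have "ennreal t < ennreal (t + e)" using assms(2) t(2) by (intro ennreal_lessI) auto
  then have "(INF s\<in>A. F s) < (INF s\<in>A. F s) + ennreal e"
    using t assms(2) by (simp add: ennreal_plus[symmetric] del: ennreal_plus)
  then show ?thesis by (simp add: INF_less_iff)
qed

lemma cost_shift:
  "cost l s = cost l (\<lambda>j. s (j + k)) + (\<Sum>j<k. l (s j) * ennreal (dist (s j) (s (Suc j))))"
  unfolding cost_def by (subst suminf_offset[OF summableI, of _ k]) simp

lemma adm_shift: "adm l x s \<Longrightarrow> adm l (s k) (\<lambda>j. s (j + k))"
  unfolding adm_def using LIMSEQ_ignore_initial_segment[of "\<lambda>n. l (s n)" 0 k] by simp

lemma T_le_cost: "adm l x s \<Longrightarrow> Tf l x \<le> cost l s"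
  unfolding Tf_def by (rule INF_lower) simp

lemma T_prepend: "Tf l x \<le> l x * ennreal (dist x y) + Tf l y"
proof (rule ennreal_le_epsilon)
  fix e :: real assume fin: "l x * ennreal (dist x y) + Tf l y < top" and e: "0 < e"
  have "Tf l y < \<infinity>" using fin by (simp add: top_unique less_top)
  then obtain s where s: "adm l y s" "cost l s < Tf l y + ennreal e"
    using INF_approx[of "cost l" "{s. adm l y s}" e] e unfolding Tf_def by auto
  define s' where "s' = case_nat x s"
  have "(\<lambda>n. l (s' (Suc n))) \<longlonglongrightarrow> 0" using s(1) by (simp add: s'_def adm_def)
  then have "(\<lambda>n. l (s' n)) \<longlonglongrightarrow> 0" by (rule LIMSEQ_imp_Suc)
  then have "adm l x s'" unfolding adm_def by (simp add: s'_def)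
  then have "Tf l x \<le> cost l s'" by (rule T_le_cost)
  also have "cost l s' = cost l s + l x * ennreal (dist x y)"
    using cost_shift[of l s' 1] s(1) by (simp add: s'_def adm_def)
  also have "\<dots> \<le> Tf l y + ennreal e + l x * ennreal (dist x y)"
    using s(2) by (intro add_right_mono) simp
  also have "Tf l y + ennreal e + l x * ennreal (dist x y) = l x * ennreal (dist x y) + Tf l y + ennreal e"
    by (simp add: ac_simps)
  finally show "Tf l x \<le> l x * ennreal (dist x y) + Tf l y + ennreal e" .
qed

lemma U_le_T: "Uf l x \<le> Tf l x"
  unfolding Uf_def by (intro SUP_least INF_lower) auto

lemma U_less: "Uf l x < a \<Longrightarrow> 0 < r \<Longrightarrow> \<exists>y\<in>ball x r. Tf l y < a"
proof -
  assume a: "Uf l x < a" and r: "0 < r"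
  have "(INF y\<in>ball x r. Tf l y) \<le> Uf l x"
    unfolding Uf_def using r by (intro SUP_upper) auto
  then have "(INF y\<in>ball x r. Tf l y) < a" using a by simp
  then show ?thesis by (simp add: INF_less_iff)
qed

lemma U_lsc: "lsc (Uf l)"
  unfolding lsc_def
proof
  fix t
  show "closed {x. Uf l x \<le> t}"
    unfolding closed_sequential_limits
  proof (intro allI impI, elim conjE)
    fix xs l0 assume xs: "\<forall>n. xs n \<in> {x. Uf l x \<le> t}" and lim: "xs \<longlonglongrightarrow> l0"
    have "Uf l l0 \<le> t"
      unfolding Uf_def
    proof (rule SUP_least)
      fix r :: real assume "r \<in> {0<..}"
      then have r: "0 < r" by simp
      have r2: "0 < r/2" using r by simp
      obtain no where "\<forall>n\<ge>no. dist (xs n) l0 < r/2"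
        using lim[unfolded lim_sequentially, rule_format, OF r2] by blast
      then obtain n where n: "dist (xs n) l0 < r/2" by blast
      have sub: "ball (xs n) (r/2) \<subseteq> ball l0 r"
      proof
        fix w assume "w \<in> ball (xs n) (r/2)"
        then have "dist (xs n) w < r/2" by simp
        then show "w \<in> ball l0 r" using n dist_triangle[of l0 w "xs n"] by (simp add: dist_commute)
      qed
      have "(INF y\<in>ball l0 r. Tf l y) \<le> (INF y\<in>ball (xs n) (r/2). Tf l y)"
        by (rule INF_superset_mono[OF sub]) simp
      also have "\<dots> \<le> Uf l (xs n)"
        unfolding Uf_def using r by (intro SUP_upper) auto
      also have "\<dots> \<le> t" using xs by simp
      finally show "(INF y\<in>ball l0 r. Tf l y) \<le> t" .
    qed
    then show "l0 \<in> {x. Uf l x \<le> t}" by simp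
  qed
qed

lemma H0_tails:
  fixes l :: "'a::metric_space \<Rightarrow> ennreal"
  assumes "H0 l"
  shows "\<exists>xb::nat \<Rightarrow> 'a. (\<forall>e>0. \<exists>k. Tf l (xb k) < ennreal e) \<and> Tf l (xb 0) < \<infinity>"
proof -
  obtain xb where S: "(\<Sum>n. l (xb n) * ennreal (dist (xb n) (xb (Suc n)))) < \<infinity>"
    and L: "(\<lambda>n. l (xb n)) \<longlonglongrightarrow> 0"
    using assms unfolding H0_def by blast
  define f where "f = (\<lambda>n. l (xb n) * ennreal (dist (xb n) (xb (Suc n))))"
  define fr where "fr n = enn2real (f n)" for n
  have sumf: "suminf f < \<infinity>" using S by (simp add: f_def)
  have ftop: "f n < top" for n using ennreal_suminf_lessD[of f top n] sumf by simp
  have fe: "f n = ennreal (fr n)" for n using ftop[of n] by (simp add: fr_def)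
  have fr0: "0 \<le> fr n" for n by (simp add: fr_def)
  have summ: "summable fr"
    using sumf fr0 by (intro summable_suminf_not_top) (auto simp: fe[symmetric])
  have admk: "adm l (xb k) (\<lambda>j. xb (j + k))" for k
    using adm_shift[of l "xb 0" xb k] L by (simp add: adm_def)
  have Tk: "Tf l (xb k) \<le> ennreal (\<Sum>i. fr (i + k))" for k
  proof -
    have "Tf l (xb k) \<le> cost l (\<lambda>j. xb (j + k))" by (rule T_le_cost[OF admk])
    also have "cost l (\<lambda>j. xb (j + k)) = (\<Sum>i. ennreal (fr (i + k)))"
      unfolding cost_def by (simp add: fe[symmetric] f_def)
    also have "\<dots> = ennreal (\<Sum>i. fr (i + k))"
      using fr0 summable_ignore_initial_segment[OF summ, of k] by (intro suminf_ennreal2) auto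
    finally show ?thesis .
  qed
  have EX: "\<exists>k. Tf l (xb k) < ennreal e" if e: "0 < e" for e
  proof -
    obtain N where N: "\<forall>n\<ge>N. norm (\<Sum>i. fr (i + n)) < e"
      using suminf_exist_split[OF e summ] by blast
    then have "(\<Sum>i. fr (i + N)) < e" by auto
    then have "ennreal (\<Sum>i. fr (i + N)) < ennreal e" by (rule ennreal_lessI[OF e])
    then have "Tf l (xb N) < ennreal e" by (rule le_less_trans[OF Tk[of N]])
    then show ?thesis by blast
  qed
  have T0: "Tf l (xb 0) < \<infinity>" using le_less_trans[OF Tk[of 0] ennreal_less_top] by simp
  have "(\<forall>e>0. \<exists>k. Tf l (xb k) < ennreal e) \<and> Tf l (xb 0) < \<infinity>"
    using EX T0 by simp
  then show ?thesis by blast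
qed


lemma T_fin:
  assumes "H0 l" "l x < \<infinity>"
  shows "Tf l x < \<infinity>"
proof -
  obtain xb :: "nat \<Rightarrow> 'a" where T0: "Tf l (xb 0) < \<infinity>" using H0_tails[OF assms(1)] by blast
  have "l x * ennreal (dist x (xb 0)) < \<infinity>" using assms(2) by (simp add: ennreal_mult_less_top)
  then have "l x * ennreal (dist x (xb 0)) + Tf l (xb 0) < \<infinity>" using T0 by simp
  then show ?thesis using T_prepend[of l x "xb 0"] by (rule le_less_trans[rotated])
qed

lemma U_inf:
  assumes "H0 l"
  shows "(INF x. Uf l x) = 0"
proof -
  obtain xb :: "nat \<Rightarrow> 'a" where E: "\<forall>e>0. \<exists>k. Tf l (xb k) < ennreal e" using H0_tails[OF assms(1)] by blast
  have "(INF x. Uf l x) \<le> 0"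
  proof (rule ennreal_le_epsilon)
    fix e :: real assume "0 < e"
    then obtain k where "Tf l (xb k) < ennreal e" using E by blast
    then have "Uf l (xb k) \<le> ennreal e" using U_le_T[of l "xb k"] by simp
    then have "(INF x. Uf l x) \<le> ennreal e" by (rule INF_lower2[OF UNIV_I])
    then show "(INF x. Uf l x) \<le> 0 + ennreal e" by simp
  qed
  then show ?thesis by simp
qed

lemma U_proper:
  assumes "H0 l"
  shows "proper (Uf l)"
proof -
  obtain xb :: "nat \<Rightarrow> 'a" where T0: "Tf l (xb 0) < \<infinity>" using H0_tails[OF assms(1)] by blast
  then have "Uf l (xb 0) < \<infinity>" using U_le_T[of l "xb 0"] by (rule le_less_trans[rotated])
  then have "Uf l (xb 0) \<noteq> \<infinity>" by simp
  then show ?thesis unfolding proper_def by blast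
qed

lemma U_slope_le:
  assumes "H0 l"
  shows "global_slope (Uf l) x \<le> l x"
proof (cases "l x = \<infinity>")
  case True then show ?thesis by simp
next
  case False
  define lx where "lx = enn2real (l x)"
  have lxe: "l x = ennreal lx" using False by (simp add: lx_def ennreal_enn2real_if)
  have lx0: "0 \<le> lx" by (simp add: lx_def)
  have Tx: "Tf l x < \<infinity>" using T_fin[OF assms] False by (simp add: less_top)
  have Ux: "Uf l x < \<infinity>" using U_le_T[of l x] Tx by (rule le_less_trans)
  have "\<forall>q. Uf l x \<le> Uf l q + ennreal (lx * dist x q)"
  proof
    fix q
    show "Uf l x \<le> Uf l q + ennreal (lx * dist x q)"
    proof (rule ennreal_le_epsilon)
      fix e :: real assume fin: "Uf l q + ennreal (lx * dist x q) < top" and e: "0 < e"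
      have "Uf l q < top" using fin by (simp add: top_unique less_top)
      then obtain uq where uq: "Uf l q = ennreal uq" "0 \<le> uq" by (cases "Uf l q") auto
      define r where "r = e / (2 * (lx + 1))"
      have r: "0 < r" using e lx0 by (simp add: r_def)
      have lxr: "lx * r \<le> e / 2"
        using e lx0 by (simp add: r_def field_simps)
      have "Uf l q < ennreal (uq + e/2)" using uq e by (simp add: ennreal_lessI)
      then obtain y where y: "y \<in> ball q r" "Tf l y < ennreal (uq + e/2)" using U_less r by blast
      then have "Tf l y < top" using le_less_trans ennreal_less_top by (metis infinity_ennreal_def less_trans)
      then obtain ty where ty: "Tf l y = ennreal ty" "0 \<le> ty" by (cases "Tf l y") auto
      have tyb: "ty < uq + e/2" using y(2) ty ennreal_less_iff by simp
      have dxy: "dist x y \<le> dist x q + r" using y(1) dist_triangle[of x y q] by simp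
      have "lx * dist x y \<le> lx * (dist x q + r)" using dxy lx0 by (rule mult_left_mono)
      then have lxd: "lx * dist x y \<le> lx * dist x q + e/2" using lxr by (simp add: distrib_left)
      have "Uf l x \<le> Tf l x" by (rule U_le_T)
      also have "\<dots> \<le> l x * ennreal (dist x y) + Tf l y" by (rule T_prepend)
      also have "\<dots> = ennreal (lx * dist x y + ty)"
        using lxe ty lx0 by (simp add: ennreal_mult)
      also have "\<dots> \<le> ennreal (uq + lx * dist x q + e)"
        using lxd tyb by (intro ennreal_leI) linarith
      also have "\<dots> = Uf l q + ennreal (lx * dist x q) + ennreal e"
        using uq lx0 e by (simp add: ennreal_plus[symmetric] del: ennreal_plus)
      finally show "Uf l x \<le> Uf l q + ennreal (lx * dist x q) + ennreal e" .
    qed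
  qed
  then have "global_slope (Uf l) x \<le> ennreal lx" using slope_le_iff[of "Uf l" x lx, OF Ux lx0] by blast
  then show ?thesis using lxe by simp
qed

lemma path_dist: "dist (s 0) (s k) \<le> (\<Sum>j<k. dist (s j) (s (Suc j)))"
proof (induction k)
  case 0 then show ?case by simp
next
  case (Suc k)
  have "dist (s 0) (s (Suc k)) \<le> dist (s 0) (s k) + dist (s k) (s (Suc k))" by (rule dist_triangle)
  then show ?case using Suc by simp
qed


lemma U_slope_ge:
  fixes l :: "'a::metric_space \<Rightarrow> ennreal"
  assumes lsc: "lsc l"
  shows "l x \<le> global_slope (Uf l) x"
proof (cases "Uf l x = \<infinity>")
  case True then show ?thesis using slope_top[of "Uf l" x] by simp
next
  case False
  obtain ux where ux: "Uf l x = ennreal ux" "0 \<le> ux" using False by (cases "Uf l x") auto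
  show ?thesis
  proof (rule ccontr)
    assume "\<not> l x \<le> global_slope (Uf l) x"
    then have G: "global_slope (Uf l) x < l x" by simp
    obtain c2 where c2: "global_slope (Uf l) x < c2" "c2 < l x" using dense[OF G] by blast
    have "c2 < top" using c2(2) top_greatest[of "l x"] by (rule less_le_trans)
    then obtain c2r where c2r: "c2 = ennreal c2r" "0 \<le> c2r" by (cases c2) auto
    obtain c1 where c1: "global_slope (Uf l) x < c1" "c1 < c2" using dense[OF c2(1)] by blast
    have "c1 < top" using c1(2) \<open>c2 < top\<close> by (rule less_trans)
    then obtain c1r where c1r: "c1 = ennreal c1r" "0 \<le> c1r" by (cases c1) auto
    have c12: "c1r < c2r" using c1(2) c1r c2r ennreal_less_iff by simp
    have "0 < ennreal c1r" using c1(1) c1r(1) le_less_trans[OF zero_le] by blast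
    then have c1pos: "0 < c1r" by simp
    have c2pos: "0 < c2r" using c1pos c12 by simp
    have "open (- {w. l w \<le> c2})" using lscD[OF lsc, of c2] by (simp add: open_Compl)
    moreover have "x \<in> - {w. l w \<le> c2}" using c2(2) by (simp add: not_le)
    ultimately obtain \<rho> where rho: "0 < \<rho>" "ball x \<rho> \<subseteq> - {w. l w \<le> c2}"
      unfolding open_contains_ball by blast
    have inball: "c2 < l w" if "dist x w < \<rho>" for w
      using rho(2) that by (auto simp: not_le)
    define e where "e = (c2r - c1r) * \<rho> / 2"
    define \<eta> where "\<eta> = min \<rho> ((c2r - c1r) * \<rho> / (2 * c2r))"
    have e0: "0 < e" using c12 rho by (simp add: e_def)
    have eta0: "0 < \<eta>" using c12 rho c2pos by (simp add: \<eta>_def)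
    have eta_rho: "\<eta> \<le> \<rho>" by (simp add: \<eta>_def)
    have c2eta: "c2r * \<eta> \<le> (c2r - c1r) * \<rho> / 2"
    proof -
      have "\<eta> \<le> (c2r - c1r) * \<rho> / (2 * c2r)" by (simp add: \<eta>_def)
      then have "c2r * \<eta> \<le> c2r * ((c2r - c1r) * \<rho> / (2 * c2r))" using c2pos by (intro mult_left_mono) auto
      then show ?thesis using c2pos by simp
    qed
    have "Uf l x < ennreal (ux + e)" using ux e0 by (simp add: ennreal_lessI)
    then obtain y where y: "y \<in> ball x \<eta>" "Tf l y < ennreal (ux + e)" using U_less eta0 by blast
    then have "(INF s\<in>{s. adm l y s}. cost l s) < ennreal (ux + e)" unfolding Tf_def by simp
    then obtain s where s0: "s \<in> {s. adm l y s}" "cost l s < ennreal (ux + e)"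
      unfolding INF_less_iff by blast
    then have s: "adm l y s" "cost l s < ennreal (ux + e)" by auto
    have "0 < c2" using c2r c2pos by simp
    then have ev: "eventually (\<lambda>n. l (s n) < c2) sequentially"
      using s(1) unfolding adm_def by (intro order_tendstoD(2)) auto
    then obtain k0 where k0: "l (s k0) < c2" by (auto simp: eventually_sequentially)
    define k where "k = (LEAST k. l (s k) < c2)"
    have k: "l (s k) < c2" unfolding k_def by (rule LeastI[of _ k0]) (rule k0)
    have before: "c2 \<le> l (s j)" if "j < k" for j
      using not_less_Least[of j "\<lambda>k. l (s k) < c2"] that unfolding k_def by (simp add: not_less)
    define z where "z = s k"
    have dxz: "\<rho> \<le> dist x z"
    proof (rule ccontr)
      assume "\<not> \<rho> \<le> dist x z"
      then have "c2 < l z" using inball by simp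
      then show False using k by (simp add: z_def)
    qed
    have part1: "Uf l z \<le> cost l (\<lambda>j. s (j + k))"
      using U_le_T[of l z] T_le_cost[OF adm_shift[OF s(1), of k]] by (simp add: z_def)
    have part2: "ennreal (c2r * dist y z) \<le> (\<Sum>j<k. l (s j) * ennreal (dist (s j) (s (Suc j))))"
    proof -
      have "ennreal (c2r * dist y z) \<le> ennreal (c2r * (\<Sum>j<k. dist (s j) (s (Suc j))))"
        using path_dist[of s k] s(1) c2pos by (intro ennreal_leI mult_left_mono) (auto simp: adm_def z_def)
      also have "\<dots> = (\<Sum>j<k. ennreal (c2r * dist (s j) (s (Suc j))))"
        using c2pos by (simp add: sum_distrib_left)
      also have "\<dots> \<le> (\<Sum>j<k. l (s j) * ennreal (dist (s j) (s (Suc j))))"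
      proof (rule sum_mono)
        fix j assume "j \<in> {..<k}"
        then have "c2 \<le> l (s j)" using before by simp
        then have "ennreal c2r * ennreal (dist (s j) (s (Suc j))) \<le> l (s j) * ennreal (dist (s j) (s (Suc j)))"
          using c2r by (intro mult_right_mono) auto
        then show "ennreal (c2r * dist (s j) (s (Suc j))) \<le> l (s j) * ennreal (dist (s j) (s (Suc j)))"
          using c2pos by (simp add: ennreal_mult)
      qed
      finally show ?thesis .
    qed
    have "Uf l z + ennreal (c2r * dist y z) \<le> cost l s"
      using add_mono[OF part1 part2] cost_shift[of l s k] by simp
    then have lt: "Uf l z + ennreal (c2r * dist y z) < ennreal (ux + e)" using s(2) by (rule le_less_trans)
    have "Uf l z \<le> Uf l z + ennreal (c2r * dist y z)" by (rule add_increasing2) auto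
    then have "Uf l z < ennreal (ux + e)" using lt by (rule le_less_trans)
    then have "Uf l z < top" using ennreal_less_top by (rule less_trans)
    then obtain uz where uz: "Uf l z = ennreal uz" "0 \<le> uz" by (cases "Uf l z") auto
    have "ennreal (uz + c2r * dist y z) < ennreal (ux + e)"
      using lt uz c2pos by (simp add: ennreal_plus[symmetric] del: ennreal_plus)
    then have ineq: "uz + c2r * dist y z < ux + e"
      using uz(2) c2pos by (subst (asm) ennreal_less_iff) auto
    have dyz: "dist x z - \<eta> \<le> dist y z"
      using y(1) dist_triangle[of x z y] by simp
    have "c2r * (dist x z - \<eta>) \<le> c2r * dist y z" using dyz c2pos by (intro mult_left_mono) auto
    then have A: "c2r * dist x z - c2r * \<eta> \<le> c2r * dist y z" by (simp add: right_diff_distrib)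
    have B: "(c2r - c1r) * \<rho> \<le> (c2r - c1r) * dist x z" using dxz c12 by (intro mult_left_mono) auto
    have B2: "c2r * \<rho> - c1r * \<rho> \<le> c2r * dist x z - c1r * dist x z"
      using B by (simp add: left_diff_distrib)
    have c2eta2: "c2r * \<eta> \<le> (c2r * \<rho> - c1r * \<rho>) / 2"
      using c2eta by (simp add: left_diff_distrib)
    have e2: "e = (c2r * \<rho> - c1r * \<rho>) / 2" by (simp add: e_def left_diff_distrib)
    define P where "P = c2r * \<rho> - c1r * \<rho>"
    define X1 where "X1 = c2r * dist x z"
    define X2 where "X2 = c1r * dist x z"
    define Y1 where "Y1 = c2r * dist y z"
    define H where "H = c2r * \<eta>"
    have i1: "uz + Y1 < ux + e" using ineq by (simp add: Y1_def)
    have i2: "X1 - H \<le> Y1" using A by (simp add: X1_def H_def Y1_def)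
    have i3: "P \<le> X1 - X2" using B2 by (simp add: P_def X1_def X2_def)
    have i4: "H \<le> P / 2" using c2eta2 by (simp add: H_def P_def)
    have i5: "e = P / 2" using e2 by (simp add: P_def)
    have "X2 \<le> ux - uz" using i1 i2 i3 i4 i5 by linarith
    then have "c1r * dist x z \<le> ux - uz" by (simp add: X2_def)
    moreover have "z \<noteq> x" using dxz rho by auto
    ultimately have "ennreal c1r \<le> global_slope (Uf l) x"
      using slope_ge[of "Uf l" x ux z uz c1r] ux uz c1r by simp
    then show False using c1(1) c1r(1) by simp
  qed
qed

theorem corollary6p14:
  fixes l :: "'a::complete_space \<Rightarrow> ennreal"
  assumes "lsc l"
    and "(INF x. l x) = 0"
    and "H0 l"
  shows "\<exists>!u :: 'a \<Rightarrow> ennreal. proper u \<and> lsc u \<and> (INF x. u x) = 0 \<and>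
           (\<forall>x. global_slope u x = l x)"
proof (rule ex1I[of _ "Uf l"])
  have sl: "global_slope (Uf l) x = l x" for x
    using U_slope_le[OF assms(3), of x] U_slope_ge[OF assms(1), of x] by (rule antisym)
  show "proper (Uf l) \<and> lsc (Uf l) \<and> (INF x. Uf l x) = 0 \<and> (\<forall>x. global_slope (Uf l) x = l x)"
    using U_proper[OF assms(3)] U_lsc[of l] U_inf[OF assms(3)] sl by blast
  fix v assume v: "proper v \<and> lsc v \<and> (INF x. v x) = 0 \<and> (\<forall>x. global_slope v x = l x)"
  show "v = Uf l"
  proof (rule ext, rule antisym)
    fix x
    show "v x \<le> Uf l x"
      using comparison[of v "Uf l" x] v U_lsc[of l] sl by simp
    show "Uf l x \<le> v x"
      using comparison[of "Uf l" v x] v U_lsc[of l] sl U_inf[OF assms(3)] by simp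
  qed
qed


end
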